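(* Let $g:\mathbb{R}\to\mathbb{R}$ be a $C^1$ function and let $s$ be a positive integer. Suppose there exists an integer $i\geq 1$ such that $$\lambda_i < \min_{x\in\mathbb{R}} g'(x) < \max_{x\in\mathbb{R}} g'(x) < \lambda_{i+1},$$ where $\lambda_j = j^2$ (in particular, the minimum and maximum of $g'$ on $\mathbb{R}$ are assumed to exist). Then for every $f\in L^2[0,2\pi]$ that is $2\pi/s$-periodic, every solution $u$ of the problem $$-u''(t) + g(u(t)) = f(t),\qquad u(0)=u(2\pi),\quad u'(0)=u'(2\pi),$$ is $2\pi/(ks)$-periodic for some $k\in\mathbb{N}$ (and hence is also $2\pi/s$-periodic).
   Context: $\lambda_j = j^2$, $j\in\{0,1,2,\dots\}$, are the eigenvalues of the periodic eigenvalue problem $-h''=\lambda h$, $h(0)=h(2\pi)$, $h'(0)=h'(2\pi)$. Solutions are sought in $H^1_{per}[0,2\pi]=\{u\in H^1[0,2\pi] : u(0)=u(2\pi),\ u'(0)=u'(2\pi)\}$. A function on $[0,2\pi]$ is called $T$-periodic if its $2\pi$-periodic extension to $\mathbb{R}$ is $T$-periodic. *)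

theory Defs
  imports "HOL-Analysis.Analysis"
begin

definition lam :: "nat \<Rightarrow> real" where
  "lam j = real j ^ 2"

definition L2 :: "(real \<Rightarrow> real) \<Rightarrow> bool" where
  "L2 h \<longleftrightarrow> set_borel_measurable lebesgue {0..2*pi} h
              \<and> set_integrable lebesgue {0..2*pi} (\<lambda>t. (h t)^2)"

text \<open>v is the (L^2) weak derivative of u on [0,2pi], with u its absolutely continuous
  representative: u(t) = u(0) + int_0^t v for all t in [0,2pi].  So u is in H^1[0,2pi].\<close>
definition weak_deriv :: "(real \<Rightarrow> real) \<Rightarrow> (real \<Rightarrow> real) \<Rightarrow> bool" where
  "weak_deriv u v \<longleftrightarrow> L2 v \<and>
     (\<forall>t\<in>{0..2*pi}. u t = u 0 + set_lebesgue_integral lebesgue {0..t} v)"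

text \<open>u solves -u'' + g(u) = f, u(0)=u(2pi), u'(0)=u'(2pi) (u in H^1_per, with
  u' absolutely continuous and the equation holding a.e. on [0,2pi]).\<close>
definition is_solution :: "(real \<Rightarrow> real) \<Rightarrow> (real \<Rightarrow> real) \<Rightarrow> (real \<Rightarrow> real) \<Rightarrow> bool" where
  "is_solution g f u \<longleftrightarrow>
     (\<exists>v w. weak_deriv u v \<and> weak_deriv v w \<and> u 0 = u (2*pi) \<and> v 0 = v (2*pi) \<and>
        (AE t in lebesgue. t \<in> {0..2*pi} \<longrightarrow> - w t + g (u t) = f t))"

definition per_ext :: "(real \<Rightarrow> real) \<Rightarrow> real \<Rightarrow> real" where
  "per_ext h t = h (t - 2*pi * of_int \<lfloor>t / (2*pi)\<rfloor>)"

definition T_periodic :: "real \<Rightarrow> (real \<Rightarrow> real) \<Rightarrow> bool" where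
  "T_periodic T h \<longleftrightarrow> (\<forall>t. per_ext h (t + T) = per_ext h t)"

definition T_periodic_ae :: "real \<Rightarrow> (real \<Rightarrow> real) \<Rightarrow> bool" where
  "T_periodic_ae T h \<longleftrightarrow> (AE t in lebesgue. per_ext h (t + T) = per_ext h t)"

end

theory Submission
  imports Defs
begin

lemma per_ext_periodic: "per_ext h (t + 2*pi) = per_ext h t"
proof -
  have "(t + 2*pi) / (2*pi) = t/(2*pi) + 1" by (simp add: field_simps)
  then have "\<lfloor>(t + 2*pi) / (2*pi)\<rfloor> = \<lfloor>t/(2*pi)\<rfloor> + 1" by simp
  then show ?thesis unfolding per_ext_def by (simp add: algebra_simps)
qed

lemma per_ext_on:
  fixes n :: int
  assumes "2*pi*n \<le> x" "x < 2*pi*(n+1)"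
  shows "per_ext h x = h (x - 2*pi*n)"
proof -
  have "\<lfloor>x/(2*pi)\<rfloor> = n"
    using assms by (subst floor_eq_iff) (simp add: field_simps)
  then show ?thesis unfolding per_ext_def by simp
qed

lemma per_ext_red: "per_ext h x = h (x - 2*pi*\<lfloor>x/(2*pi)\<rfloor>) \<and>
   0 \<le> x - 2*pi*\<lfloor>x/(2*pi)\<rfloor> \<and> x - 2*pi*\<lfloor>x/(2*pi)\<rfloor> < 2*pi"
proof -
  have a: "of_int \<lfloor>x/(2*pi)\<rfloor> \<le> x/(2*pi)" "x/(2*pi) < of_int \<lfloor>x/(2*pi)\<rfloor> + 1"
    by linarith+
  have b: "2*pi*\<lfloor>x/(2*pi)\<rfloor> \<le> x" using a(1) pi_gt_zero by (simp add: le_divide_eq mult.commute)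
  have c0: "x = (x/(2*pi))*(2*pi)" by simp
  have c: "x < 2*pi*(\<lfloor>x/(2*pi)\<rfloor> + 1)"
    using mult_strict_right_mono[OF a(2), of "2*pi"] pi_gt_zero c0 by (simp add: algebra_simps)
  show ?thesis unfolding per_ext_def using b c by (auto simp: algebra_simps)
qed


definition REL :: "(real \<Rightarrow> real) \<Rightarrow> (real \<Rightarrow> real) \<Rightarrow> bool" where
  "REL H Q \<longleftrightarrow> (\<forall>a b. a \<le> b \<longrightarrow> (Q has_integral (H b - H a)) {a..b})"

lemma ext_step1:
  fixes n :: int
  assumes loc: "\<And>a b. 0 \<le> a \<Longrightarrow> a \<le> b \<Longrightarrow> b \<le> 2*pi \<Longrightarrow> (q has_integral (h b - h a)) {a..b}"
    and h0: "h 0 = h (2*pi)"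
    and ab: "2*pi*n \<le> a" "a \<le> b" "b \<le> 2*pi*(n+1)"
  shows "(per_ext q has_integral (per_ext h b - per_ext h a)) {a..b}"
proof -
  define c where "c = 2*pi*n"
  have H: "per_ext h x = h (x - c)" if "c \<le> x" "x \<le> c + 2*pi" for x
  proof (cases "x < c + 2*pi")
    case True
    then show ?thesis using per_ext_on[of n x h] that unfolding c_def by (simp add: algebra_simps)
  next
    case False
    then have x: "x = 2*pi*(n+1)" using that unfolding c_def by (simp add: algebra_simps)
    have "per_ext h x = h (x - 2*pi*(n+1))"
      by (rule per_ext_on) (use x pi_gt_zero in \<open>auto simp: algebra_simps\<close>)
    then show ?thesis using x h0 unfolding c_def by (simp add: algebra_simps)
  qed
  have "(q has_integral (h (b - c) - h (a - c))) {a + -c..b + -c}"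
    using loc[of "a - c" "b - c"] ab unfolding c_def by (simp add: algebra_simps)
  then have "((q \<circ> (+) (-c)) has_integral (h (b - c) - h (a - c))) {a..b}"
    using has_integral_shift_Icc_real by blast
  then have 1: "((q \<circ> (+) (-c)) has_integral (per_ext h b - per_ext h a)) {a..b}"
    using H[of a] H[of b] ab unfolding c_def by (simp add: algebra_simps)
  show ?thesis
  proof (rule has_integral_spike[OF _ _ 1])
    show "negligible {c + 2*pi}" by simp
    fix x assume x: "x \<in> {a..b} - {c + 2*pi}"
    then have "x < c + 2*pi" using ab unfolding c_def by (auto simp: algebra_simps)
    then show "per_ext q x = (q \<circ> (+) (- c)) x"
      using per_ext_on[of n x q] x ab unfolding c_def by (auto simp: algebra_simps)
  qed
qed

lemma ext_REL:
  assumes loc: "\<And>a b. 0 \<le> a \<Longrightarrow> a \<le> b \<Longrightarrow> b \<le> 2*pi \<Longrightarrow> (q has_integral (h b - h a)) {a..b}"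
    and h0: "h 0 = h (2*pi)"
  shows "REL (per_ext h) (per_ext q)"
proof -
  let ?F = "\<lambda>x. \<lfloor>x/(2*pi)\<rfloor>"
  have fl: "2*pi*?F x \<le> x" "x < 2*pi*(?F x + 1)" for x
    using per_ext_red[of h x] by (auto simp: algebra_simps)
  have main: "\<forall>a b. a \<le> b \<longrightarrow> ?F b - ?F a \<le> int m \<longrightarrow>
      (per_ext q has_integral (per_ext h b - per_ext h a)) {a..b}" for m
  proof (induction m)
    case 0
    show ?case
    proof (intro allI impI)
      fix a b :: real assume "a \<le> b" "?F b - ?F a \<le> int 0"
      moreover have "?F a \<le> ?F b" using \<open>a \<le> b\<close> pi_gt_zero
        by (intro floor_mono) (simp add: divide_right_mono)
      ultimately have "?F b = ?F a" by simp
      then show "(per_ext q has_integral (per_ext h b - per_ext h a)) {a..b}"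
        using ext_step1[OF loc h0, of "?F a" a b] fl[of a] fl[of b] \<open>a \<le> b\<close> by simp
    qed
  next
    case (Suc m)
    show ?case
    proof (intro allI impI)
      fix a b :: real assume ab: "a \<le> b" "?F b - ?F a \<le> int (Suc m)"
      show "(per_ext q has_integral (per_ext h b - per_ext h a)) {a..b}"
      proof (cases "?F b - ?F a \<le> int m")
        case True then show ?thesis using Suc.IH ab by blast
      next
        case False
        define c where "c = 2*pi*(?F a + 1)"
        have Fc: "?F c = ?F a + 1" unfolding c_def by simp
        have "?F c \<le> ?F b" using False Fc by simp
        then have "?F a + 1 \<le> ?F b" using Fc by simp
        then have "2*pi*real_of_int (?F a + 1) \<le> 2*pi*real_of_int (?F b)"
          using pi_gt_zero by (intro mult_left_mono) auto
        then have "c \<le> b" using fl(1)[of b] unfolding c_def by linarith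
        have ac: "a \<le> c" using fl[of a] unfolding c_def by simp
        have 1: "(per_ext q has_integral (per_ext h c - per_ext h a)) {a..c}"
          using ext_step1[OF loc h0, of "?F a" a c] fl[of a] ac unfolding c_def by simp
        have 2: "(per_ext q has_integral (per_ext h b - per_ext h c)) {c..b}"
          using Suc.IH \<open>c \<le> b\<close> Fc ab by auto
        show ?thesis using has_integral_combine[OF ac \<open>c \<le> b\<close> 1 2] by simp
      qed
    qed
  qed
  show ?thesis unfolding REL_def
  proof (intro allI impI)
    fix a b :: real assume "a \<le> b"
    have "?F a \<le> ?F b" using \<open>a \<le> b\<close> pi_gt_zero
      by (intro floor_mono) (simp add: divide_right_mono)
    then show "(per_ext q has_integral (per_ext h b - per_ext h a)) {a..b}"
      using main[of "nat (?F b - ?F a)"] \<open>a \<le> b\<close> by simp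
  qed
qed


lemma REL_repr:
  assumes "REL H Q" "a \<le> x"
  shows "H x = H a + integral {a..x} Q" "Q integrable_on {a..x}"
  using assms unfolding REL_def by (auto dest!: spec[of _ a] spec[of _ x] simp: has_integral_integrable_integral)

lemma REL_cont:
  assumes "REL H Q"
  shows "isCont H t"
proof -
  have "continuous_on {t-1..t+1} (\<lambda>x. H (t-1) + integral {t-1..x} Q)"
    using indefinite_integral_continuous_1[OF REL_repr(2)[OF assms, of "t-1" "t+1"]]
    by (intro continuous_intros) auto
  then have "continuous_on {t-1..t+1} H"
    by (rule continuous_on_eq) (use REL_repr(1)[OF assms] in auto)
  then show ?thesis by (rule continuous_on_interior) auto
qed

lemma REL_deriv:
  assumes "REL H Q" "continuous_on UNIV Q"
  shows "(H has_real_derivative Q t) (at t)"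
proof -
  have "((\<lambda>x. integral {t-1..x} Q) has_real_derivative Q t) (at t within {t-1..t+1})"
    by (rule integral_has_real_derivative) (use assms(2) continuous_on_subset in auto)
  then have "((\<lambda>x. integral {t-1..x} Q) has_real_derivative Q t) (at t)"
    by (subst (asm) at_within_interior) auto
  then have "((\<lambda>x. H (t-1) + integral {t-1..x} Q) has_real_derivative Q t) (at t)"
    by (auto intro!: derivative_eq_intros)
  then show ?thesis
  proof (rule has_field_derivative_transform_within_open[of _ _ _ "{t-1<..<t+1}"])
    fix x assume "x \<in> {t-1<..<t+1}"
    then show "H (t-1) + integral {t-1..x} Q = H x" using REL_repr(1)[OF assms(1), of "t-1" x] by simp
  qed auto
qed


lemma L2_int:
  assumes "L2 h"
  shows "h absolutely_integrable_on {0..2*pi}"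
proof (rule measurable_bounded_by_integrable_imp_absolutely_integrable[where g="\<lambda>x. 1 + (h x)^2"])
  show "h \<in> borel_measurable (lebesgue_on {0..2*pi})"
    using assms unfolding L2_def set_borel_measurable_def
    by (subst borel_measurable_restrict_space_iff) auto
  show "{0..2*pi} \<in> sets lebesgue" by simp
  have "set_integrable lebesgue {0..2*pi} (\<lambda>x. (h x)^2)"
    using assms unfolding L2_def by blast
  from set_lebesgue_integral_eq_integral(1)[OF this]
  have "(\<lambda>x. (h x)^2) integrable_on {0..2*pi}" .
  then show "(\<lambda>x. 1 + (h x)^2) integrable_on {0..2*pi}"
    by (intro integrable_add) auto
  fix x
  have "0 \<le> (\<bar>h x\<bar> - 1)^2" by simp
  moreover have "(\<bar>h x\<bar> - 1)^2 = (h x)^2 - 2*\<bar>h x\<bar> + 1"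
    by (simp add: power2_eq_square algebra_simps)
  moreover have "0 \<le> (h x)^2" by simp
  ultimately have "\<bar>h x\<bar> \<le> 1 + (h x)^2" by linarith
  then show "norm (h x) \<le> 1 + (h x)^2" by simp
qed

lemma wd_loc:
  assumes "weak_deriv u v" "0 \<le> a" "a \<le> b" "b \<le> 2*pi"
  shows "(v has_integral (u b - u a)) {a..b}"
proof -
  have "L2 v" using assms(1) unfolding weak_deriv_def by (rule conjunct1)
  then have vi: "v absolutely_integrable_on {0..2*pi}" by (rule L2_int)
  have rep: "u t = u 0 + integral {0..t} v" if "0 \<le> t" "t \<le> 2*pi" for t
  proof -
    have "{0..t} \<subseteq> {0..2*pi}" using that by simp
    then have "v absolutely_integrable_on {0..t}"
      by (intro set_integrable_subset[OF vi]) simp_all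
    then have "set_lebesgue_integral lebesgue {0..t} v = integral {0..t} v"
      by (rule set_lebesgue_integral_eq_integral(2))
    moreover have al: "\<forall>t\<in>{0..2*pi}. u t = u 0 + set_lebesgue_integral lebesgue {0..t} v"
      using assms(1) unfolding weak_deriv_def by (rule conjunct2)
    have "t \<in> {0..2*pi}" using that by simp
    with al have "u t = u 0 + set_lebesgue_integral lebesgue {0..t} v"
      by (rule bspec)
    ultimately show ?thesis by simp
  qed
  have "v integrable_on {0..2*pi}" by (rule set_lebesgue_integral_eq_integral(1)[OF vi])
  then have vb: "v integrable_on {0..b}"
    by (rule integrable_subinterval_real) (use assms in simp)
  have "integral {0..a} v + integral {a..b} v = integral {0..b} v"
    using Henstock_Kurzweil_Integration.integral_combine[OF assms(2,3) vb] .
  moreover have "v integrable_on {a..b}"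
    by (rule integrable_subinterval_real[OF vb]) (use assms in simp)
  moreover have "u a = u 0 + integral {0..a} v" by (rule rep) (use assms in simp_all)
  moreover have "u b = u 0 + integral {0..b} v" by (rule rep) (use assms in simp_all)
  ultimately have "integral {a..b} v = u b - u a" "v integrable_on {a..b}" by linarith+
  then show ?thesis
    by (simp add: has_integral_integrable_integral)
qed


lemma ae_neg:
  assumes "AE t in lebesgue. P t"
  shows "\<exists>N. negligible N \<and> (\<forall>t. t \<notin> N \<longrightarrow> P t)"
proof -
  obtain N where N: "{x \<in> space lebesgue. \<not> P x} \<subseteq> N" "emeasure lebesgue N = 0" "N \<in> sets lebesgue"
    using assms by (rule AE_E)
  then have "negligible N" unfolding negligible_iff_null_sets by (simp add: null_sets_def)
  moreover have "\<forall>t. t \<notin> N \<longrightarrow> P t" using N(1) by auto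
  ultimately show ?thesis by blast
qed

lemma ae_ext:
  assumes "AE t in lebesgue. t \<in> {0..2*pi} \<longrightarrow> Pr t"
  shows "\<exists>N. negligible N \<and> (\<forall>r. r \<notin> N \<longrightarrow> Pr (r - 2*pi*\<lfloor>r/(2*pi)\<rfloor>))"
proof -
  obtain N0 where N0: "negligible N0" "\<And>t. t \<notin> N0 \<Longrightarrow> t \<in> {0..2*pi} \<longrightarrow> Pr t"
    using ae_neg[OF assms] by blast
  define N where "N = (\<Union>k\<in>(UNIV::int set). (+) (2*pi*k) ` N0)"
  have "negligible N" unfolding N_def
    by (rule negligible_countable_Union) (auto intro: negligible_translation N0(1))
  moreover have "Pr (r - 2*pi*\<lfloor>r/(2*pi)\<rfloor>)" if "r \<notin> N" for r
  proof -
    define r' where "r' = r - 2*pi*\<lfloor>r/(2*pi)\<rfloor>"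
    have r': "r' \<in> {0..2*pi}" using per_ext_red[of id r] unfolding r'_def by auto
    have "r' \<notin> N0"
    proof
      assume "r' \<in> N0"
      then have "r \<in> (+) (2*pi*\<lfloor>r/(2*pi)\<rfloor>) ` N0"
        by (rule rev_image_eqI) (simp add: r'_def)
      then show False using that unfolding N_def by blast
    qed
    then show ?thesis using N0(2) r' unfolding r'_def by blast
  qed
  ultimately show ?thesis by blast
qed


theorem theorem2:
  fixes g g' :: "real \<Rightarrow> real" and s i :: nat
  assumes C1: "\<forall>x. (g has_real_derivative g' x) (at x)" "continuous_on UNIV g'"
    and s_pos: "s \<ge> 1"
    and i_pos: "i \<ge> 1"
    and minmax: "\<exists>xm xM. (\<forall>x. g' xm \<le> g' x) \<and> (\<forall>x. g' x \<le> g' xM) \<and>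
                   lam i < g' xm \<and> g' xm < g' xM \<and> g' xM < lam (i + 1)"
  shows "\<forall>f u. L2 f \<longrightarrow> T_periodic_ae (2*pi / real s) f \<longrightarrow> is_solution g f u \<longrightarrow>
           (\<exists>k::nat. k \<ge> 1 \<and> T_periodic (2*pi / (real k * real s)) u)"
proof (intro allI impI)
  fix f u :: "real \<Rightarrow> real"
  assume Lf: "L2 f" and Tf: "T_periodic_ae (2*pi / real s) f" and sol: "is_solution g f u"
  define T where "T = 2*pi / real s"
  obtain v w where wd1: "weak_deriv u v" and wd2: "weak_deriv v w" and u0: "u 0 = u (2*pi)"
    and v0: "v 0 = v (2*pi)" and eq: "AE t in lebesgue. t \<in> {0..2*pi} \<longrightarrow> - w t + g (u t) = f t"
    using sol unfolding is_solution_def apply (elim exE conjE) apply (rule that) apply assumption+ done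
  define U where "U = per_ext u"
  define V where "V = per_ext v"
  define W where "W = per_ext w"
  define F where "F = per_ext f"
  have RU: "REL U V" unfolding U_def V_def
    by (rule ext_REL[OF wd_loc[OF wd1] u0])
  have RV: "REL V W" unfolding W_def V_def
    by (rule ext_REL[OF wd_loc[OF wd2] v0])
  have Vcont: "continuous_on UNIV V"
    using REL_cont[OF RV] by (simp add: continuous_at_imp_continuous_on)
  have dU: "(U has_real_derivative V t) (at t)" for t
    by (rule REL_deriv[OF RU Vcont])
  have Ucont: "isCont U t" for t using dU by (rule DERIV_isCont)
  have gcont: "isCont g x" for x using C1(1) DERIV_isCont by blast
  obtain xm where xm: "\<forall>x. g' xm \<le> g' x" "lam i < g' xm" using minmax by blast
  have "lam i \<ge> 1" using i_pos unfolding lam_def by simp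
  then have gpos: "g' x > 0" for x using xm(1)[rule_format, of x] xm(2) by linarith
  have gmono: "g x < g y" if "x < y" for x y
    by (rule DERIV_pos_imp_increasing[OF that]) (use C1(1) gpos in blast)
  obtain N1 where N1: "negligible N1" "\<And>r. r \<notin> N1 \<Longrightarrow> - W r + g (U r) = F r"
  proof -
    from ae_ext[OF eq] obtain N where "negligible N"
      "\<forall>r. r \<notin> N \<longrightarrow> - w (r - 2*pi*\<lfloor>r/(2*pi)\<rfloor>) + g (u (r - 2*pi*\<lfloor>r/(2*pi)\<rfloor>)) = f (r - 2*pi*\<lfloor>r/(2*pi)\<rfloor>)"
      by blast
    then show ?thesis using that unfolding W_def U_def F_def per_ext_def by blast
  qed
  obtain N2 where N2: "negligible N2" "\<And>r. r \<notin> N2 \<Longrightarrow> F (r + T) = F r"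
    using ae_neg[OF Tf[unfolded T_periodic_ae_def]] unfolding F_def T_def by blast
  define N where "N = N1 \<union> ((+) (-T) ` N1) \<union> N2"
  have "negligible ((+) (-T) ` N1)" by (rule negligible_translation[OF N1(1)])
  then have negN: "negligible N" unfolding N_def using N1(1) N2(1) by (intro negligible_Un)
  define Q where "Q = (\<lambda>r. g (U (r + T)) - g (U r))"
  have Qcont: "continuous_on UNIV Q" unfolding Q_def
    by (intro continuous_at_imp_continuous_on ballI continuous_intros continuous_at_compose[OF _ gcont] Ucont)
       (auto intro!: continuous_intros simp: isCont_o2[OF _ gcont] isCont_o2[OF _ Ucont])
  have RZ: "REL (\<lambda>t. V (t + T) - V t) Q" unfolding REL_def
  proof (intro allI impI)
    fix a b :: real assume ab: "a \<le> b"
    have "(W has_integral (V (b + T) - V (a + T))) {a + T..b + T}"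
      using RV ab unfolding REL_def by simp
    then have 1: "((W \<circ> (+) T) has_integral (V (b + T) - V (a + T))) {a..b}"
      using has_integral_shift_Icc_real by blast
    have 2: "(W has_integral (V b - V a)) {a..b}" using RV ab unfolding REL_def by simp
    have 3: "((\<lambda>r. (W \<circ> (+) T) r - W r) has_integral (V (b + T) - V b - (V (a + T) - V a))) {a..b}"
      using has_integral_diff[OF 1 2] by (simp add: algebra_simps)
    show "(Q has_integral (V (b + T) - V b - (V (a + T) - V a))) {a..b}"
    proof (rule has_integral_spike[OF negN _ 3])
      fix r assume r: "r \<in> {a..b} - N"
      then have r1: "r \<notin> N1" "r \<notin> N2" unfolding N_def by auto
      have "r + T \<notin> N1"
      proof
        assume "r + T \<in> N1"
        then have "r \<in> (+) (-T) ` N1" by (rule rev_image_eqI) simp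
        then show False using r unfolding N_def by blast
      qed
      then have "- W (r + T) + g (U (r + T)) = F (r + T)" by (rule N1(2))
      moreover have "- W r + g (U r) = F r" using r1 N1(2) by blast
      moreover have "F (r + T) = F r" using r1 N2(2) by blast
      ultimately show "Q r = (W \<circ> (+) T) r - W r" unfolding Q_def by (simp add: add.commute)
    qed
  qed
  define Z where "Z = (\<lambda>t. U (t + T) - U t)"
  define Zp where "Zp = (\<lambda>t. V (t + T) - V t)"
  have dZp: "(Zp has_real_derivative Q t) (at t)" for t
    unfolding Zp_def by (rule REL_deriv[OF RZ Qcont])
  have dZ: "(Z has_real_derivative Zp t) (at t)" for t
  proof -
    have "((\<lambda>x. U (x + T)) has_real_derivative V (t + T)) (at t)"
      using dU[of "t + T"] DERIV_shift by blast
    then show ?thesis unfolding Z_def Zp_def by (auto intro!: derivative_eq_intros dU)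
  qed
  define E where "E = (\<lambda>t. Z t * Zp t)"
  have dE: "(E has_real_derivative (Zp t * Zp t + Z t * Q t)) (at t)" for t
    unfolding E_def by (auto intro!: derivative_eq_intros dZ dZp)
  have ZQpos: "Z t * Q t > 0" if "Z t \<noteq> 0" for t
  proof -
    have ne: "U (t + T) \<noteq> U t" using that unfolding Z_def by simp
    consider "U (t + T) < U t" | "U (t + T) > U t" using linorder_neqE[OF ne] by blast
    then show ?thesis
    proof cases
      case 1
      then have "Z t < 0" "Q t < 0" using gmono[OF 1] by (simp_all add: Z_def Q_def)
      then show ?thesis by (rule mult_neg_neg)
    next
      case 2
      then have "Z t > 0" "Q t > 0" using gmono[OF 2] by (simp_all add: Z_def Q_def)
      then show ?thesis by (rule mult_pos_pos)
    qed
  qed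
  have ZQ: "Z t * Q t \<ge> 0" for t
    using ZQpos[of t] by (cases "Z t = 0") auto
  have dEnn: "Zp t * Zp t + Z t * Q t \<ge> 0" for t using ZQ[of t] by simp
  have Eper: "E (t + 2*pi) = E t" for t
  proof -
    have "(t + 2*pi) + T = (t + T) + 2*pi" by simp
    then show ?thesis unfolding E_def Z_def Zp_def U_def V_def by (simp only: per_ext_periodic)
  qed
  have Emono: "E x \<le> E y" if "x \<le> y" for x y
    by (rule DERIV_nonneg_imp_nondecreasing[OF that]) (use dE dEnn in blast)
  have Z0: "Z t = 0" for t
  proof -
    define a where "a = t - pi"
    have "\<forall>y. \<bar>t - y\<bar> < pi \<longrightarrow> E y \<le> E t"
    proof (intro allI impI)
      fix y assume "\<bar>t - y\<bar> < pi"
      then have "y \<le> a + 2*pi" "a \<le> t" unfolding a_def by auto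
      then have "E y \<le> E (a + 2*pi)" "E a \<le> E t" using Emono by auto
      then show "E y \<le> E t" using Eper[of a] by simp
    qed
    then have "Zp t * Zp t + Z t * Q t = 0" using DERIV_local_max[OF dE pi_gt_zero] by blast
    moreover have "Zp t * Zp t \<ge> 0" by simp
    ultimately have "Z t * Q t \<le> 0" by linarith
    then show ?thesis using ZQpos by force
  qed
  show "\<exists>k::nat. k \<ge> 1 \<and> T_periodic (2*pi / (real k * real s)) u"
  proof (intro exI conjI)
    show "(1::nat) \<le> 1" by simp
    show "T_periodic (2*pi / (real 1 * real s)) u"
      unfolding T_periodic_def
    proof
      fix t
      have "U (t + T) = U t" using Z0[of t] unfolding Z_def by simp
      then show "per_ext u (t + 2*pi / (real 1 * real s)) = per_ext u t"
        unfolding U_def T_def by simp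
    qed
  qed
qed

end
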